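(* Let $S$ be a symmetric numerical semigroup. Then $\#I(S)=\#T(S)$.
   Context: A numerical semigroup is a subset $S\subseteq\mathbb{N}$ (nonnegative integers) containing $0$, closed under addition, with $\mathbb{N}\setminus S$ finite. $F(S)$ is the Frobenius number, the largest integer not in $S$. $S$ is symmetric if $F(S)-x\in S$ for all $x\in\mathbb{Z}\setminus S$. An isolated gap of $S$ is an element $x\in\mathbb{N}\setminus S$ with $x-1,x+1\in S$; $I(S)$ is the set of isolated gaps. $N(S)=\{s\in S: s<F(S)\}$ and $T(S)=\{s\in N(S): s-1\notin S \text{ and } s+1\notin S\}$. *)

theory Defs
  imports Main
begin

definition numerical_semigroup :: "nat set \<Rightarrow> bool" where
  "numerical_semigroup S \<longleftrightarrow> 0 \<in> S \<and> (\<forall>a\<in>S. \<forall>b\<in>S. a + b \<in> S) \<and> finite (UNIV - S)"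

text \<open>Frobenius number, as an integer; by the usual convention it is -1 when S is all of N.\<close>
definition frobenius :: "nat set \<Rightarrow> int" where
  "frobenius S = (if UNIV - S = {} then -1 else int (Max (UNIV - S)))"

definition symmetric_ns :: "nat set \<Rightarrow> bool" where
  "symmetric_ns S \<longleftrightarrow> (\<forall>x::int. x \<notin> int ` S \<longrightarrow> frobenius S - x \<in> int ` S)"

definition isolated_gaps :: "nat set \<Rightarrow> nat set" where
  "isolated_gaps S = {x. x \<notin> S \<and> x \<ge> 1 \<and> x - 1 \<in> S \<and> x + 1 \<in> S}"

definition N_set :: "nat set \<Rightarrow> nat set" where
  "N_set S = {s \<in> S. int s < frobenius S}"

definition T_set :: "nat set \<Rightarrow> nat set" where
  "T_set S = {s \<in> N_set S. int s - 1 \<notin> int ` S \<and> s + 1 \<notin> S}"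

end

theory Submission
  imports Defs
begin

lemma sym_B:
  assumes "numerical_semigroup S" "z \<in> int ` S"
  shows "frobenius S - z \<notin> int ` S"
proof
  assume "frobenius S - z \<in> int ` S"
  then obtain b where b: "b \<in> S" "frobenius S - z = int b" by auto
  from assms(2) obtain a where a: "a \<in> S" "z = int a" by auto
  have ab: "a + b \<in> S" using assms(1) a b unfolding numerical_semigroup_def by blast
  have F: "frobenius S = int (a + b)" using a b by simp
  show False
  proof (cases "UNIV - S = {}")
    case True then show ?thesis using F unfolding frobenius_def by simp
  next
    case False
    have fin: "finite (UNIV - S)" using assms(1) unfolding numerical_semigroup_def by blast
    have "Max (UNIV - S) \<in> UNIV - S" using Max_in[OF fin False] .
    moreover have "Max (UNIV - S) = a + b" using F False unfolding frobenius_def by simp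
    ultimately show False using ab by simp
  qed
qed

theorem proposition3p1:
  assumes "numerical_semigroup S" and "symmetric_ns S"
  shows "card (isolated_gaps S) = card (T_set S)"
proof -
  let ?F = "frobenius S"
  define mem where "mem z \<longleftrightarrow> z \<in> int ` S" for z
  have A: "\<And>z. \<not> mem z \<Longrightarrow> mem (?F - z)" using assms(2) unfolding symmetric_ns_def mem_def by blast
  have B: "\<And>z. mem z \<Longrightarrow> \<not> mem (?F - z)" using sym_B[OF assms(1)] unfolding mem_def by blast
  have memn: "\<And>n::nat. mem (int n) \<longleftrightarrow> n \<in> S" unfolding mem_def by auto
  have memneg: "\<And>z. mem z \<Longrightarrow> z \<ge> 0" unfolding mem_def by auto
  define g where "g x = nat (?F - int x)" for x
  have G: "isolated_gaps S = {x. \<not> mem (int x) \<and> x \<ge> 1 \<and> mem (int x - 1) \<and> mem (int x + 1)}"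
  proof -
    have "\<And>x::nat. x \<ge> 1 \<Longrightarrow> int x - 1 = int (x - 1)" by simp
    moreover have "\<And>x::nat. int x + 1 = int (x + 1)" by simp
    ultimately show ?thesis unfolding isolated_gaps_def using memn by (metis (no_types, lifting))
  qed
  have T: "T_set S = {s. mem (int s) \<and> int s < ?F \<and> \<not> mem (int s - 1) \<and> \<not> mem (int s + 1)}"
  proof -
    have "\<And>x::nat. int x + 1 = int (x + 1)" by simp
    then show ?thesis unfolding T_set_def N_set_def
      by (simp only: memn[symmetric] mem_def[symmetric]) (auto simp: mem_def)
  qed
  have inj: "inj_on g (isolated_gaps S)"
  proof (rule inj_onI)
    fix x y assume x: "x \<in> isolated_gaps S" and y: "y \<in> isolated_gaps S" and e: "g x = g y"
    have "?F - int x \<ge> 0" using x A memneg unfolding G by blast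
    moreover have "?F - int y \<ge> 0" using y A memneg unfolding G by blast
    ultimately show "x = y" using e unfolding g_def by simp
  qed
  have img: "g ` isolated_gaps S = T_set S"
  proof
    show "g ` isolated_gaps S \<subseteq> T_set S"
    proof
      fix s assume "s \<in> g ` isolated_gaps S"
      then obtain x where x: "x \<in> isolated_gaps S" and s: "s = g x" by auto
      have x1: "\<not> mem (int x)" "x \<ge> 1" "mem (int x - 1)" "mem (int x + 1)" using x unfolding G by auto
      have m: "mem (?F - int x)" using A x1(1) .
      hence "?F - int x \<ge> 0" using memneg by blast
      hence s': "int s = ?F - int x" using s unfolding g_def by simp
      have "\<not> mem (?F - (int x - 1))" using B x1(3) by blast
      moreover have "\<not> mem (?F - (int x + 1))" using B x1(4) by blast
      moreover have e: "int s - 1 = ?F - (int x + 1)" "int s + 1 = ?F - (int x - 1)" using s' by simp_all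
      ultimately have "\<not> mem (int s - 1) \<and> \<not> mem (int s + 1)" unfolding e by simp
      moreover have "mem (int s) \<and> int s < ?F" using m s' x1(2) by simp
      ultimately have "mem (int s) \<and> int s < ?F \<and> \<not> mem (int s - 1) \<and> \<not> mem (int s + 1)" by blast
      then show "s \<in> T_set S" unfolding T by simp
    qed
  next
    show "T_set S \<subseteq> g ` isolated_gaps S"
    proof
      fix s assume "s \<in> T_set S"
      hence s: "mem (int s)" "int s < ?F" "\<not> mem (int s - 1)" "\<not> mem (int s + 1)" unfolding T by auto
      have m1: "mem (?F - (int s - 1))" using A s(3) .
      have m2: "mem (?F - (int s + 1))" using A s(4) .
      have nm: "\<not> mem (?F - int s)" using B s(1) .
      define x where "x = nat (?F - int s)"
      have xi: "int x = ?F - int s" using s(2) unfolding x_def by simp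
      have e: "int x - 1 = ?F - (int s + 1)" "int x + 1 = ?F - (int s - 1)" using xi by simp_all
      have "mem (int x - 1) \<and> mem (int x + 1)" unfolding e using m1 m2 by simp
      moreover have "\<not> mem (int x) \<and> x \<ge> 1" using nm xi s(2) by simp
      ultimately have "\<not> mem (int x) \<and> x \<ge> 1 \<and> mem (int x - 1) \<and> mem (int x + 1)" by blast
      hence "x \<in> isolated_gaps S" unfolding G by simp
      moreover have "s = g x" unfolding g_def xi by simp
      ultimately show "s \<in> g ` isolated_gaps S" by blast
    qed
  qed
  show ?thesis using card_image[OF inj] img by simp
qed

end
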